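(* Let $N\ge1$, let $\xi_0,\dots,\xi_N$ be the LGL nodes on $[-1,1]$ with LGL weights $\omega_0,\dots,\omega_N$, $\mathcal{M}=\mathrm{diag}(\omega_0,\dots,\omega_N)$, and let $\mathcal{V}_{ij}=L_j(\xi_i)$ ($i,j=0,\dots,N$) be the Vandermonde matrix of the normalized Legendre polynomials $L_j=\sqrt{(2j+1)/2}\,P_j$. Let $\mathcal{C}=\mathrm{diag}(\sigma_0,\dots,\sigma_N)$ be a diagonal (modal cutoff) matrix with real entries, and define the filter matrix $\mathcal{F}=\mathcal{V}\,\mathcal{C}\,\mathcal{V}^{-1}$ and the auxiliary filter matrix $\widetilde{\mathcal{F}}=\mathcal{M}^{-1}\mathcal{F}^T\mathcal{M}$. Then $\widetilde{\mathcal{F}}=\mathcal{F}$.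
   Context: The LGL nodes are $\xi_0=-1$, $\xi_N=1$ and the zeros of $P_N'$ (with $P_N$ the degree-$N$ Legendre polynomial); the LGL weights are $\omega_i=\frac{2}{N(N+1)P_N(\xi_i)^2}$. $\mathcal{V}$ is invertible since the $L_j$ form a basis of polynomials of degree $\le N$ and the nodes are distinct. *)

theory Defs
  imports Complex_Main "HOL-Computational_Algebra.Polynomial" "Jordan_Normal_Form.Gauss_Jordan_Elimination"
begin

fun legendre :: "nat \<Rightarrow> real poly" where
  "legendre 0 = 1"
| "legendre (Suc 0) = [:0, 1:]"
| "legendre (Suc (Suc n)) =
     Polynomial.smult (1 / real (n + 2))
       (Polynomial.smult (real (2 * n + 3)) ([:0, 1:] * legendre (Suc n)) - Polynomial.smult (real (n + 1)) (legendre n))"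

definition norm_legendre :: "nat \<Rightarrow> real \<Rightarrow> real" where
  "norm_legendre j x = sqrt ((2 * real j + 1) / 2) * poly (legendre j) x"

definition lgl_nodes :: "nat \<Rightarrow> real set" where
  "lgl_nodes N = {-1, 1} \<union> {x. poly (pderiv (legendre N)) x = 0}"

definition lgl_node :: "nat \<Rightarrow> nat \<Rightarrow> real" where
  "lgl_node N i = sorted_list_of_set (lgl_nodes N) ! i"

definition lgl_weight :: "nat \<Rightarrow> nat \<Rightarrow> real" where
  "lgl_weight N i = 2 / (real N * real (N + 1) * (poly (legendre N) (lgl_node N i))^2)"

definition diag_matrix :: "nat \<Rightarrow> (nat \<Rightarrow> real) \<Rightarrow> real mat" where
  "diag_matrix n d = mat n n (\<lambda>(i, j). if i = j then d i else 0)"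

definition mass_mat :: "nat \<Rightarrow> real mat" where
  "mass_mat N = diag_matrix (N + 1) (lgl_weight N)"

definition vander_mat :: "nat \<Rightarrow> real mat" where
  "vander_mat N = mat (N + 1) (N + 1) (\<lambda>(i, j). norm_legendre j (lgl_node N i))"

definition inv_mat :: "real mat \<Rightarrow> real mat" where
  "inv_mat A = the (mat_inverse A)"

definition filter_mat :: "nat \<Rightarrow> (nat \<Rightarrow> real) \<Rightarrow> real mat" where
  "filter_mat N \<sigma> = vander_mat N * diag_matrix (N + 1) \<sigma> * inv_mat (vander_mat N)"

definition aux_filter_mat :: "nat \<Rightarrow> (nat \<Rightarrow> real) \<Rightarrow> real mat" where
  "aux_filter_mat N \<sigma> = inv_mat (mass_mat N) * transpose_mat (filter_mat N \<sigma>) * mass_mat N"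

end

theory Submission
  imports Defs "Jordan_Normal_Form.Determinant"
begin

lemma inv_mat_eq:
  assumes A: "A \<in> carrier_mat n n" and B: "B \<in> carrier_mat n n" and AB: "A * B = 1\<^sub>m n"
  shows "inv_mat A = B"
proof -
  have BA: "B * A = 1\<^sub>m n" by (rule mat_mult_left_right_inverse[OF A B AB])
  from det_mult[OF A B, unfolded AB] have dA: "det A \<noteq> 0" by auto
  have "mat_inverse A \<noteq> None" using mat_inverse(1)[OF A, where b="()"] det_non_zero_imp_unit[OF A dA, where b="()"] by blast
  then obtain B' where S: "mat_inverse A = Some B'" by auto
  from mat_inverse(2)[OF A S] have AB': "A * B' = 1\<^sub>m n" and B'c: "B' \<in> carrier_mat n n" by auto
  have "B' = (B * A) * B'" using BA B'c by simp
  also have "\<dots> = B * (A * B')" using A B B'c by (simp add: assoc_mult_mat)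
  also have "\<dots> = B" using AB' B by simp
  finally show ?thesis unfolding inv_mat_def S by simp
qed

abbreviation P :: "nat \<Rightarrow> real \<Rightarrow> real" where "P n x \<equiv> poly (legendre n) x"
abbreviation D :: "nat \<Rightarrow> real \<Rightarrow> real" where "D n x \<equiv> poly (pderiv (legendre n)) x"

lemma L: "legendre (Suc (Suc n)) = Polynomial.smult (1 / real (n + 2))
       (Polynomial.smult (real (2 * n + 3)) ([:0, 1:] * legendre (Suc n)) - Polynomial.smult (real (n + 1)) (legendre n))"
  by (rule legendre.simps(3))

lemma P_rec: "real (n+2) * P (Suc (Suc n)) x = real (2*n+3) * x * P (Suc n) x - real (n+1) * P n x"
proof -
  have "P (Suc (Suc n)) x = (real (2*n+3) * x * P (Suc n) x - real (n+1) * P n x) / real (n+2)"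
    unfolding L by (simp del: legendre.simps)
  then show ?thesis by (simp del: legendre.simps add: field_simps)
qed

lemma D_rec: "real (n+2) * D (Suc (Suc n)) x = real (2*n+3) * (P (Suc n) x + x * D (Suc n) x) - real (n+1) * D n x"
proof -
  have "D (Suc (Suc n)) x = (real (2*n+3) * (P (Suc n) x + x * D (Suc n) x) - real (n+1) * D n x) / real (n+2)"
    unfolding L by (simp del: legendre.simps add: pderiv_smult pderiv_diff pderiv_mult pderiv_pCons add_divide_distrib diff_divide_distrib distrib_left)
  then show ?thesis by (simp del: legendre.simps add: field_simps)
qed

lemma P0[simp]: "P 0 x = 1" by simp
lemma P1[simp]: "P (Suc 0) x = x" by simp
lemma D0[simp]: "D 0 x = 0" by simp
lemma D1[simp]: "D (Suc 0) x = 1" by (simp add: pderiv_pCons)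

declare legendre.simps(3)[simp del]

lemma P_rec': "(real n + 2) * P (Suc (Suc n)) x = (2 * real n + 3) * x * P (Suc n) x - (real n + 1) * P n x"
  using P_rec[of n x] by (simp add: add.commute)
lemma D_rec': "(real n + 2) * D (Suc (Suc n)) x = (2 * real n + 3) * (P (Suc n) x + x * D (Suc n) x) - (real n + 1) * D n x"
  using D_rec[of n x] by (simp add: add.commute)

lemma alg1:
  fixes x m d0 d1 d2 p0 p1 p2 :: real
  assumes A: "x*d1 - d0 = m*p1" and B: "d1 - x*d0 = m*p0" and R: "(m+1)*p2 = (2*m+1)*x*p1 - m*p0"
    and DR: "(m+1)*d2 = (2*m+1)*(p1 + x*d1) - m*d0" and m0: "m \<ge> 0"
  shows "x*d2 - d1 = (m+1)*p2 \<and> d2 - x*d1 = (m+1)*p1"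
proof -
  have m: "m*p1 = x*d1 - d0" "m*p0 = d1 - x*d0" using A B by simp_all
  have "(m+1)*(x*d2 - d1) - (m+1)*((m+1)*p2) = x*((m+1)*d2) - (m+1)*d1 - (m+1)*((m+1)*p2)"
    by (simp add: algebra_simps)
  also have "\<dots> = x*((2*m+1)*(p1 + x*d1) - m*d0) - (m+1)*d1 - (m+1)*((2*m+1)*x*p1 - m*p0)"
    by (simp only: DR R)
  also have "\<dots> = -(2*m+1)*x*(m*p1) + (2*m+1)*x*x*d1 - m*x*d0 - (m+1)*d1 + (m+1)*(m*p0)"
    by (simp add: algebra_simps)
  also have "\<dots> = -(2*m+1)*x*(x*d1 - d0) + (2*m+1)*x*x*d1 - m*x*d0 - (m+1)*d1 + (m+1)*(d1 - x*d0)"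
    by (simp only: m)
  also have "\<dots> = 0" by (simp add: algebra_simps)
  finally have e1: "(m+1)*(x*d2 - d1) = (m+1)*((m+1)*p2)" by simp
  have "(m+1)*(d2 - x*d1) - (m+1)*((m+1)*p1) = (m+1)*d2 - (m+1)*x*d1 - (m+1)*((m+1)*p1)"
    by (simp add: algebra_simps)
  also have "\<dots> = (2*m+1)*(p1 + x*d1) - m*d0 - (m+1)*x*d1 - (m+1)*((m+1)*p1)"
    by (simp only: DR)
  also have "\<dots> = m*(x*d1 - d0) - m*(m*p1)" by (simp add: algebra_simps)
  also have "\<dots> = 0" by (simp only: m)
  finally have e2: "(m+1)*(d2 - x*d1) = (m+1)*((m+1)*p1)" by simp
  have "m + 1 \<noteq> 0" using m0 by simp
  then show ?thesis using e1 e2 by simp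
qed

lemma AB: "x * D (Suc n) x - D n x = real (Suc n) * P (Suc n) x \<and> D (Suc n) x - x * D n x = real (Suc n) * P n x"
proof (induction n)
  case 0
  then show ?case by (simp add: pderiv_pCons)
next
  case (Suc n)
  have "x * D (Suc (Suc n)) x - D (Suc n) x = (real (Suc n) + 1) * P (Suc (Suc n)) x \<and>
        D (Suc (Suc n)) x - x * D (Suc n) x = (real (Suc n) + 1) * P (Suc n) x"
  proof (rule alg1)
    show "x * D (Suc n) x - D n x = real (Suc n) * P (Suc n) x" using Suc.IH by blast
    show "D (Suc n) x - x * D n x = real (Suc n) * P n x" using Suc.IH by blast
    show "(real (Suc n) + 1) * D (Suc (Suc n)) x = (2 * real (Suc n) + 1) * (P (Suc n) x + x * D (Suc n) x) - real (Suc n) * D n x"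
      using D_rec'[of n x] by (simp add: algebra_simps)
    show "real (Suc n) \<ge> 0" by simp
    show "(real (Suc n) + 1) * P (Suc (Suc n)) x = (2 * real (Suc n) + 1) * x * P (Suc n) x - real (Suc n) * P n x"
      using P_rec'[of n x] by (simp add: algebra_simps)
  qed
  then show ?case by simp
qed

lemma P_one: "P n 1 = 1 \<and> P (Suc n) 1 = 1"
proof (induction n)
  case 0 then show ?case by simp
next
  case (Suc n)
  have "(real n + 2) * P (Suc (Suc n)) 1 = (real n + 2) * 1"
    using P_rec'[of n 1] Suc by simp
  then show ?case using Suc by simp
qed

lemma P_mone: "P n (-1) = (-1)^n \<and> P (Suc n) (-1) = (-1)^(Suc n)"
proof (induction n)
  case 0 then show ?case by simp
next
  case (Suc n)
  have "(real n + 2) * P (Suc (Suc n)) (-1) = (real n + 2) * (-1)^n"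
    using P_rec'[of n "-1"] Suc by (simp add: algebra_simps)
  then show ?case using Suc by simp
qed

lemma CD: "(x - y) * (\<Sum>k\<le>n. (2 * real k + 1) * P k x * P k y)
   = (real n + 1) * (P (Suc n) x * P n y - P n x * P (Suc n) y)"
proof (induction n)
  case 0 then show ?case by (simp add: algebra_simps)
next
  case (Suc n)
  have "(x - y) * (\<Sum>k\<le>Suc n. (2 * real k + 1) * P k x * P k y)
     = (real n + 1) * (P (Suc n) x * P n y - P n x * P (Suc n) y)
       + (2 * real n + 3) * (x - y) * P (Suc n) x * P (Suc n) y"
    using Suc by (simp add: algebra_simps)
  also have "\<dots> = ((real n + 2) * P (Suc (Suc n)) x) * P (Suc n) y - P (Suc n) x * ((real n + 2) * P (Suc (Suc n)) y)"
    by (simp only: P_rec') (simp add: algebra_simps)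
  finally show ?case by (simp add: algebra_simps)
qed

lemma DCD: "(\<Sum>k\<le>n. (2 * real k + 1) * P k x ^ 2)
   = (real n + 1) * (D (Suc n) x * P n x - D n x * P (Suc n) x)"
proof (induction n)
  case 0 then show ?case by (simp add: pderiv_pCons)
next
  case (Suc n)
  have "(\<Sum>k\<le>Suc n. (2 * real k + 1) * P k x ^ 2)
     = (real n + 1) * (D (Suc n) x * P n x - D n x * P (Suc n) x)
       + (2 * real n + 3) * P (Suc n) x ^ 2"
    using Suc by (simp add: algebra_simps)
  also have "\<dots> = ((real n + 2) * D (Suc (Suc n)) x) * P (Suc n) x - D (Suc n) x * ((real n + 2) * P (Suc (Suc n)) x)"
    by (simp only: P_rec' D_rec') (simp add: algebra_simps power2_eq_square)
  finally show ?case by (simp add: algebra_simps)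
qed

lemma deg_leg: "degree (legendre n) \<le> n"
proof (induction n rule: legendre.induct)
  case 1 then show ?case by simp
next
  case 2 then show ?case by simp
next
  case (3 n)
  have a: "degree ([:0, 1:] * legendre (Suc n)) \<le> Suc (Suc n)"
    using degree_mult_le[of "[:0,1::real:]" "legendre (Suc n)"] 3 by simp
  have b: "degree (legendre n) \<le> Suc (Suc n)" using 3 by simp
  have "degree (Polynomial.smult (real (2 * n + 3)) ([:0, 1:] * legendre (Suc n)) - Polynomial.smult (real (n + 1)) (legendre n)) \<le> Suc (Suc n)"
    by (rule degree_diff_le) (use a b degree_smult_le order.trans in blast)+
  then show ?case unfolding L using degree_smult_le order.trans by blast
qed

lemma factor_form:
  fixes x :: "nat \<Rightarrow> real" and m :: nat
  assumes inc: "\<And>i j. i < j \<Longrightarrow> j \<le> m \<Longrightarrow> x i < x j"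
    and roots: "\<And>i. i \<le> m \<Longrightarrow> P (Suc m) (x i) = 0"
  shows "P (Suc m) t = coeff (legendre (Suc m)) (Suc m) * (\<Prod>i\<le>m. t - x i)"
proof -
  let ?Q = "\<Prod>i\<le>m. [:- x i, 1:]"
  let ?c = "coeff (legendre (Suc m)) (Suc m)"
  have dQ: "degree ?Q = Suc m"
    by (subst degree_prod_sum_eq) auto
  have lQ: "coeff ?Q (Suc m) = 1"
    using lead_coeff_prod[of "\<lambda>i. [:- x i, 1:]" "{..m}"] dQ by simp
  have inj: "inj_on x {..m}"
    by (rule inj_onI) (metis atMost_iff inc less_irrefl linorder_neqE_nat)
  have eq: "legendre (Suc m) = Polynomial.smult ?c ?Q"
  proof (rule poly_eqI_degree_lead_coeff[where A = "x ` {..m}" and n = "Suc m"])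
    show "coeff (legendre (Suc m)) (Suc m) = coeff (Polynomial.smult ?c ?Q) (Suc m)" using lQ by simp
    show "Suc m \<le> card (x ` {..m})" using card_image[OF inj] by simp
    show "degree (legendre (Suc m)) \<le> Suc m" by (rule deg_leg)
    show "degree (Polynomial.smult ?c ?Q) \<le> Suc m" using dQ degree_smult_le order.trans by metis
    fix z assume "z \<in> x ` {..m}"
    then obtain i where i: "i \<le> m" "z = x i" by auto
    have "poly ?Q z = 0" using i by (auto simp: poly_prod)
    then show "poly (legendre (Suc m)) z = poly (Polynomial.smult ?c ?Q) z" using roots i by simp
  qed
  have "P (Suc m) t = poly (Polynomial.smult ?c ?Q) t" by (subst eq) (rule refl)
  also have "\<dots> = ?c * (\<Prod>i\<le>m. t - x i)" by (simp add: poly_prod)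
  finally show ?thesis .
qed

lemma mono_from_step:
  fixes a :: "nat \<Rightarrow> real"
  assumes "\<And>k. k < n \<Longrightarrow> a k < a (Suc k)"
  shows "i < j \<Longrightarrow> j \<le> n \<Longrightarrow> a i < a j"
proof (induction j)
  case 0 then show ?case by simp
next
  case (Suc j)
  show ?case
  proof (cases "i = j")
    case True then show ?thesis using assms Suc by simp
  next
    case False
    then have "a i < a j" using Suc by simp
    also have "a j < a (Suc j)" using assms Suc by simp
    finally show ?thesis .
  qed
qed

lemma ss_lemma: "s * s = (1::real) \<Longrightarrow> s * (A * (s * B)) = A * B"
proof -
  assume h: "s * s = 1"
  have "s * (A * (s * B)) = (s * s) * (A * B)" by (simp add: algebra_simps)
  then show ?thesis using h by simp
qed

lemma sign_prod:
  fixes y :: real and x :: "nat \<Rightarrow> real"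
  assumes k: "k \<le> Suc m" and lo: "\<And>i. i < k \<Longrightarrow> x i < y" and hi: "\<And>i. k \<le> i \<Longrightarrow> i \<le> m \<Longrightarrow> y < x i"
  shows "(-1)^(Suc m - k) * (\<Prod>i\<le>m. y - x i) > 0"
proof -
  have split: "{..m} = {..<k} \<union> {k..m}" using k by auto
  have "(\<Prod>i\<le>m. y - x i) = (\<Prod>i<k. y - x i) * (\<Prod>i\<in>{k..m}. y - x i)"
    unfolding split by (rule prod.union_disjoint) auto
  also have "(\<Prod>i\<in>{k..m}. y - x i) = (-1) ^ card {k..m} * (\<Prod>i\<in>{k..m}. x i - y)"
    by (rule prod_diff_swap)
  finally have e: "(\<Prod>i\<le>m. y - x i) = (\<Prod>i<k. y - x i) * ((-1) ^ (Suc m - k) * (\<Prod>i\<in>{k..m}. x i - y))"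
    by simp
  have p1: "(\<Prod>i<k. y - x i) > 0" by (rule prod_pos) (use lo in auto)
  have p2: "(\<Prod>i\<in>{k..m}. x i - y) > 0" by (rule prod_pos) (use hi in auto)
  have "(-1::real)^(Suc m - k) * (-1) ^ (Suc m - k) = 1"
    by (simp add: power_mult_distrib[symmetric])
  then have "(-1)^(Suc m - k) * (\<Prod>i\<le>m. y - x i) = (\<Prod>i<k. y - x i) * (\<Prod>i\<in>{k..m}. x i - y)"
    unfolding e by (rule ss_lemma)
  then show ?thesis using p1 p2 by simp
qed

lemma legendre_roots:
  "\<exists>x::nat\<Rightarrow>real. (\<forall>i j. i < j \<longrightarrow> j \<le> m \<longrightarrow> x i < x j) \<and>
     (\<forall>i\<le>m. P (Suc m) (x i) = 0 \<and> -1 < x i \<and> x i < 1 \<and> (-1)^(m-i) * P m (x i) > 0)"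
proof (induction m)
  case 0
  show ?case by (rule exI[of _ "\<lambda>_. 0"]) simp
next
  case (Suc m)
  then obtain x where inc: "\<And>i j. i < j \<Longrightarrow> j \<le> m \<Longrightarrow> x i < x j"
    and xr: "\<And>i. i \<le> m \<Longrightarrow> P (Suc m) (x i) = 0"
    and xb: "\<And>i. i \<le> m \<Longrightarrow> -1 < x i \<and> x i < 1"
    and xs: "\<And>i. i \<le> m \<Longrightarrow> (-1)^(m-i) * P m (x i) > 0" by blast
  define a where "a k = (if k = 0 then -1 else if k \<le> Suc m then x (k-1) else 1)" for k
  have a_step: "a k < a (Suc k)" if "k < Suc (Suc m)" for k
  proof -
    have "k = 0 \<or> (0 < k \<and> k \<le> m) \<or> k = Suc m" using that by linarith
    then consider "k = 0" | "0 < k \<and> k \<le> m" | "k = Suc m" by blast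
    then show ?thesis
    proof cases
      case 1 then show ?thesis using xb[of 0] by (simp add: a_def)
    next
      case 2 then show ?thesis using inc[of "k-1" k] by (simp add: a_def)
    next
      case 3 then show ?thesis using xb[of m] by (simp add: a_def)
    qed
  qed
  have a_mono: "a i < a j" if "i < j" "j \<le> Suc (Suc m)" for i j
    using mono_from_step[of "Suc (Suc m)" a, OF a_step] that by blast
  have a_bd: "-1 \<le> a k \<and> a k \<le> 1" for k
  proof (cases "k = 0 \<or> k > Suc m")
    case True then show ?thesis by (auto simp: a_def)
  next
    case False then have "k - 1 \<le> m" by auto
    then have "-1 < x (k-1) \<and> x (k-1) < 1" by (rule xb)
    then show ?thesis using False by (auto simp: a_def)
  qed
  have a_sign: "(-1)^(Suc (Suc m) - k) * P (Suc (Suc m)) (a k) > 0" if "k \<le> Suc (Suc m)" for k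
  proof -
    have "k = 0 \<or> (0 < k \<and> k \<le> Suc m) \<or> k = Suc (Suc m)" using that by linarith
    then consider "k = 0" | "0 < k \<and> k \<le> Suc m" | "k = Suc (Suc m)" by blast
    then show ?thesis
    proof cases
      case 1
      have "P (Suc (Suc m)) (-1) = (-1)^(Suc (Suc m))" using P_mone[of "Suc m"] by blast
      then show ?thesis using 1 by (simp add: a_def power_mult_distrib[symmetric])
    next
      case 3
      have "P (Suc (Suc m)) 1 = 1" using P_one[of "Suc m"] by blast
      then show ?thesis using 3 by (simp add: a_def)
    next
      case 2
      define i where "i = k - 1"
      have i: "i \<le> m" "k = Suc i" using 2 by (auto simp: i_def)
      have ak: "a k = x i" using i by (simp add: a_def)
      have r: "(real m + 2) * P (Suc (Suc m)) (x i) = - (real m + 1) * P m (x i)"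
        using P_rec'[of m "x i"] xr[OF i(1)] by (simp add: algebra_simps)
      have ex: "Suc (Suc m) - k = Suc (m - i)" using i by simp
      have "(real m + 2) * ((-1)^(Suc (Suc m) - k) * P (Suc (Suc m)) (a k))
            = - ((-1)^(m-i)) * ((real m + 2) * P (Suc (Suc m)) (x i))"
        unfolding ex ak by (simp add: algebra_simps)
      also have "\<dots> = (real m + 1) * ((-1)^(m-i) * P m (x i))" unfolding r by (simp add: algebra_simps)
      finally have "(real m + 2) * ((-1)^(Suc (Suc m) - k) * P (Suc (Suc m)) (a k))
            = (real m + 1) * ((-1)^(m-i) * P m (x i))" .
      moreover have "(real m + 1) * ((-1)^(m-i) * P m (x i)) > 0" using xs[OF i(1)] by simp
      ultimately have "(real m + 2) * ((-1)^(Suc (Suc m) - k) * P (Suc (Suc m)) (a k)) > 0" by simp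
      then show ?thesis by (simp add: zero_less_mult_iff)
    qed
  qed
  have chg: "\<exists>y. a k < y \<and> y < a (Suc k) \<and> P (Suc (Suc m)) y = 0" if "k \<le> Suc m" for k
  proof -
    have s1: "(-1)^(Suc (Suc m) - k) * P (Suc (Suc m)) (a k) > 0" using a_sign[of k] that by simp
    have s2: "(-1)^(Suc (Suc m) - Suc k) * P (Suc (Suc m)) (a (Suc k)) > 0" using a_sign[of "Suc k"] that by blast
    have ee: "Suc (Suc m) - k = Suc (Suc (Suc m) - Suc k)" using that by simp
    have "P (Suc (Suc m)) (a k) * P (Suc (Suc m)) (a (Suc k)) < 0"
    proof -
      let ?s = "(-1::real)^(Suc (Suc m) - Suc k)"
      have ss: "?s * ?s = 1" by (simp add: power_mult_distrib[symmetric])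
      have "(- ?s * P (Suc (Suc m)) (a k)) * (?s * P (Suc (Suc m)) (a (Suc k))) > 0"
        using s1 s2 unfolding ee by (simp add: mult_neg_pos)
      then have "- (?s * ?s) * (P (Suc (Suc m)) (a k) * P (Suc (Suc m)) (a (Suc k))) > 0"
        by (simp add: algebra_simps)
      then show ?thesis unfolding ss by simp
    qed
    then show ?thesis using poly_IVT[of "a k" "a (Suc k)" "legendre (Suc (Suc m))"] a_step that by auto
  qed
  then have "\<forall>k. \<exists>y. k \<le> Suc m \<longrightarrow> a k < y \<and> y < a (Suc k) \<and> P (Suc (Suc m)) y = 0" by blast
  then obtain y where y: "\<And>k. k \<le> Suc m \<Longrightarrow> a k < y k \<and> y k < a (Suc k) \<and> P (Suc (Suc m)) (y k) = 0"
    by metis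
  have y_inc: "y i < y j" if "i < j" "j \<le> Suc m" for i j
  proof -
    have "y i < a (Suc i)" using y that by simp
    also have "a (Suc i) \<le> a j" using a_mono[of "Suc i" j] that by (cases "Suc i = j") auto
    also have "a j < y j" using y that by simp
    finally show ?thesis .
  qed
  have c_pos: "coeff (legendre (Suc m)) (Suc m) > 0"
  proof -
    have "P (Suc m) 1 = coeff (legendre (Suc m)) (Suc m) * (\<Prod>i\<le>m. 1 - x i)"
      by (rule factor_form) (use inc xr in auto)
    moreover have "P (Suc m) 1 = 1" using P_one[of m] by blast
    moreover have "(\<Prod>i\<le>m. 1 - x i) > 0" by (rule prod_pos) (use xb in auto)
    ultimately have "0 < coeff (legendre (Suc m)) (Suc m) * (\<Prod>i\<le>m. 1 - x i)" by simp
    then show ?thesis using \<open>(\<Prod>i\<le>m. 1 - x i) > 0\<close> by (simp add: zero_less_mult_iff)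
  qed
  have y_sign: "(-1)^(Suc m - k) * P (Suc m) (y k) > 0" if k: "k \<le> Suc m" for k
  proof -
    have f: "P (Suc m) (y k) = coeff (legendre (Suc m)) (Suc m) * (\<Prod>i\<le>m. y k - x i)"
      by (rule factor_form) (use inc xr in auto)
    have "(-1)^(Suc m - k) * (\<Prod>i\<le>m. y k - x i) > 0"
    proof (rule sign_prod[OF k])
      fix i assume "i < k"
      then have "x i = a (Suc i)" "a (Suc i) \<le> a k" using k a_mono[of "Suc i" k] 
        by (auto simp: a_def) (cases "Suc i = k", auto)
      then show "x i < y k" using y[OF k] by simp
    next
      fix i assume "k \<le> i" "i \<le> m"
      then have "x i = a (Suc i)" "a (Suc k) \<le> a (Suc i)" using a_mono[of "Suc k" "Suc i"]
        by (auto simp: a_def) (cases "k = i", auto)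
      then show "y k < x i" using y[OF k] by simp
    qed
    then have "coeff (legendre (Suc m)) (Suc m) * ((-1)^(Suc m - k) * (\<Prod>i\<le>m. y k - x i)) > 0"
      using c_pos by simp
    then show ?thesis unfolding f by (simp add: algebra_simps)
  qed
  show ?case
  proof (rule exI[of _ y], intro conjI allI impI)
    fix i j assume "i < j" "j \<le> Suc m" then show "y i < y j" by (rule y_inc)
  next
    fix i assume i: "i \<le> Suc m"
    show "P (Suc (Suc m)) (y i) = 0" using y[OF i] by simp
    show "-1 < y i" using y[OF i] a_bd[of i] by simp
    show "y i < 1" using y[OF i] a_bd[of "Suc i"] by simp
    show "(-1)^(Suc m - i) * P (Suc m) (y i) > 0" by (rule y_sign[OF i])
  qed
qed

lemma D_one: "D (Suc n) 1 > 0"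
proof -
  have st: "D (Suc k) 1 = D k 1 + real (Suc k)" for k
    using AB[of 1 k] P_one[of k] by simp
  have "D k 1 \<ge> 0" for k
  proof (induction k)
    case 0 then show ?case by simp
  next
    case (Suc k) then show ?case using st[of k] by simp
  qed
  then show ?thesis using st[of n] by (smt (verit) of_nat_0_less_iff zero_less_Suc)
qed

lemma nodes_finite: "finite (lgl_nodes (Suc n))"
proof -
  have "pderiv (legendre (Suc n)) \<noteq> 0" using D_one[of n] by auto
  then have "finite {x. poly (pderiv (legendre (Suc n))) x = 0}" by (rule poly_roots_finite)
  then show ?thesis unfolding lgl_nodes_def by simp
qed

lemma nodes_card: "Suc (Suc n) \<le> card (lgl_nodes (Suc n))"
proof -
  obtain x :: "nat \<Rightarrow> real" where inc: "\<And>i j. i < j \<Longrightarrow> j \<le> n \<Longrightarrow> x i < x j"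
    and xp: "\<And>i. i \<le> n \<Longrightarrow> P (Suc n) (x i) = 0 \<and> -1 < x i \<and> x i < 1"
    using legendre_roots[of n] by blast
  have "\<exists>z. x i < z \<and> z < x (Suc i) \<and> D (Suc n) z = 0" if i: "i < n" for i
  proof -
    have lt: "x i < x (Suc i)" using inc i by simp
    obtain z where z: "x i < z" "z < x (Suc i)"
      "P (Suc n) (x (Suc i)) - P (Suc n) (x i) = (x (Suc i) - x i) * D (Suc n) z"
      using poly_MVT[OF lt, of "legendre (Suc n)"] by blast
    have "P (Suc n) (x (Suc i)) = 0" "P (Suc n) (x i) = 0" using xp i by simp_all
    then have "D (Suc n) z = 0" using z(3) lt by simp
    then show ?thesis using z by blast
  qed
  then have "\<forall>i. \<exists>z. i < n \<longrightarrow> x i < z \<and> z < x (Suc i) \<and> D (Suc n) z = 0" by blast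
  then obtain z where z: "\<And>i. i < n \<Longrightarrow> x i < z i \<and> z i < x (Suc i) \<and> D (Suc n) (z i) = 0"
    by metis
  have zinc: "z i < z j" if "i < j" "j < n" for i j
  proof -
    have "z i < x (Suc i)" using z that by simp
    also have "x (Suc i) \<le> x j" using inc[of "Suc i" j] that by (cases "Suc i = j") auto
    also have "x j < z j" using z that by simp
    finally show ?thesis .
  qed
  have inj: "inj_on z {..<n}"
    by (rule inj_onI) (metis lessThan_iff zinc less_irrefl linorder_neqE_nat)
  have zb: "-1 < z i \<and> z i < 1" if "i < n" for i
    using z[OF that] xp[of i] xp[of "Suc i"] that by auto
  have sub: "{-1, 1} \<union> z ` {..<n} \<subseteq> lgl_nodes (Suc n)"
    unfolding lgl_nodes_def using z by auto
  have disj: "{-1, 1} \<inter> z ` {..<n} = {}" using zb by force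
  have "card ({-1, 1} \<union> z ` {..<n}) = 2 + n"
    by (subst card_Un_disjoint) (use disj card_image[OF inj] in auto)
  then show ?thesis using card_mono[OF nodes_finite sub] by simp
qed

lemma E1: "(1 - x^2) * D (Suc n) x = real (Suc n) * (P n x - x * P (Suc n) x)"
proof -
  have A: "x * D (Suc n) x - D n x = real (Suc n) * P (Suc n) x"
   and B: "D (Suc n) x - x * D n x = real (Suc n) * P n x" using AB[of x n] by auto
  have "(1 - x^2) * D (Suc n) x = (D (Suc n) x - x * D n x) - x * (x * D (Suc n) x - D n x)"
    by (simp add: algebra_simps power2_eq_square)
  also have "\<dots> = real (Suc n) * (P n x - x * P (Suc n) x)" unfolding A B by (simp add: algebra_simps)
  finally show ?thesis .
qed

lemma node_eq: assumes "\<xi> \<in> lgl_nodes (Suc n)" shows "P n \<xi> = \<xi> * P (Suc n) \<xi>"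
proof -
  have "(1 - \<xi>^2) * D (Suc n) \<xi> = 0" using assms unfolding lgl_nodes_def by auto
  then have "real (Suc n) * (P n \<xi> - \<xi> * P (Suc n) \<xi>) = 0" using E1 by simp
  then show ?thesis by simp
qed

definition K :: "nat \<Rightarrow> real \<Rightarrow> real \<Rightarrow> real" where
  "K n x y = (\<Sum>k\<le>n. (2 * real k + 1) * P k x * P k y) + real (Suc n) * P (Suc n) x * P (Suc n) y"

lemma K_off:
  assumes "\<xi> \<in> lgl_nodes (Suc n)" "\<eta> \<in> lgl_nodes (Suc n)" "\<xi> \<noteq> \<eta>"
  shows "K n \<xi> \<eta> = 0"
proof -
  have "(\<xi> - \<eta>) * (\<Sum>k\<le>n. (2 * real k + 1) * P k \<xi> * P k \<eta>)
     = (real n + 1) * (P (Suc n) \<xi> * P n \<eta> - P n \<xi> * P (Suc n) \<eta>)" by (rule CD)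
  also have "\<dots> = (\<xi> - \<eta>) * (- (real n + 1) * P (Suc n) \<xi> * P (Suc n) \<eta>)"
    unfolding node_eq[OF assms(1)] node_eq[OF assms(2)] by (simp add: algebra_simps)
  finally have "(\<Sum>k\<le>n. (2 * real k + 1) * P k \<xi> * P k \<eta>) = - (real n + 1) * P (Suc n) \<xi> * P (Suc n) \<eta>"
    using assms(3) by simp
  then show ?thesis unfolding K_def by (simp add: algebra_simps)
qed

lemma K_diag:
  assumes "\<xi> \<in> lgl_nodes (Suc n)"
  shows "K n \<xi> \<xi> = real (Suc n) * real (Suc (Suc n)) * P (Suc n) \<xi> ^ 2"
proof -
  have A: "\<xi> * D (Suc n) \<xi> - D n \<xi> = real (Suc n) * P (Suc n) \<xi>" using AB[of \<xi> n] by auto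
  have "(\<Sum>k\<le>n. (2 * real k + 1) * P k \<xi> ^ 2)
     = (real n + 1) * (D (Suc n) \<xi> * P n \<xi> - D n \<xi> * P (Suc n) \<xi>)" by (rule DCD)
  also have "\<dots> = (real n + 1) * P (Suc n) \<xi> * (\<xi> * D (Suc n) \<xi> - D n \<xi>)"
    unfolding node_eq[OF assms] by (simp add: algebra_simps)
  also have "\<dots> = (real n + 1) * (real n + 1) * P (Suc n) \<xi> ^ 2"
    unfolding A by (simp add: power2_eq_square)
  finally have s: "(\<Sum>k\<le>n. (2 * real k + 1) * P k \<xi> * P k \<xi>) = (real n + 1) * (real n + 1) * P (Suc n) \<xi> ^ 2"
    by (simp add: power2_eq_square mult.assoc)
  show ?thesis unfolding K_def s by (simp add: algebra_simps power2_eq_square)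
qed

lemma K_ge1: "K n x x \<ge> 1"
proof -
  have "(\<Sum>k\<le>n. (2 * real k + 1) * P k x * P k x) = (\<Sum>k\<in>insert 0 {1..n}. (2 * real k + 1) * P k x * P k x)"
    by (rule sum.cong) auto
  also have "\<dots> = 1 + (\<Sum>k\<in>{1..n}. (2 * real k + 1) * P k x * P k x)" by (subst sum.insert) auto
  also have "\<dots> \<ge> 1" by (intro add_increasing2 order.refl sum_nonneg) (simp add: mult.assoc)
  finally show ?thesis unfolding K_def by (smt (verit) mult.assoc mult_nonneg_nonneg of_nat_0_le_iff zero_le_square)
qed

lemma P_node_nz: assumes "\<xi> \<in> lgl_nodes (Suc n)" shows "P (Suc n) \<xi> \<noteq> 0"
  using K_diag[OF assms] K_ge1[of n \<xi>] by auto

lemma mult_diag_right: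
  assumes A: "A \<in> carrier_mat r c"
  shows "A * diag_matrix c d = mat r c (\<lambda>(i,j). A $$ (i,j) * d j)"
proof (rule eq_matI)
  fix i j assume i: "i < dim_row (mat r c (\<lambda>(i,j). A $$ (i,j) * d j))" and j: "j < dim_col (mat r c (\<lambda>(i,j). A $$ (i,j) * d j))"
  then have ij: "i < r" "j < c" by auto
  have "(A * diag_matrix c d) $$ (i,j) = (\<Sum>k\<in>{0..<c}. A $$ (i,k) * (if k = j then d k else 0))"
    using A ij by (simp add: diag_matrix_def scalar_prod_def)
  also have "\<dots> = A $$ (i,j) * d j"
    using ij by (simp add: if_distrib[of "\<lambda>x. A $$ (i, _) * x"] sum.delta' cong: if_cong)
  finally show "(A * diag_matrix c d) $$ (i,j) = mat r c (\<lambda>(i,j). A $$ (i,j) * d j) $$ (i,j)" using ij by simp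
qed (use A in \<open>auto simp: diag_matrix_def\<close>)

lemma mult_diag_left:
  assumes A: "A \<in> carrier_mat r c"
  shows "diag_matrix r d * A = mat r c (\<lambda>(i,j). d i * A $$ (i,j))"
proof (rule eq_matI)
  fix i j assume i: "i < dim_row (mat r c (\<lambda>(i,j). d i * A $$ (i,j)))" and j: "j < dim_col (mat r c (\<lambda>(i,j). d i * A $$ (i,j)))"
  then have ij: "i < r" "j < c" by auto
  have "(diag_matrix r d * A) $$ (i,j) = (\<Sum>k\<in>{0..<r}. (if i = k then d i else 0) * A $$ (k,j))"
    using A ij by (simp add: diag_matrix_def scalar_prod_def)
  also have "\<dots> = (\<Sum>k\<in>{0..<r}. if i = k then d i * A $$ (k,j) else 0)"
    by (rule sum.cong) auto
  also have "\<dots> = d i * A $$ (i,j)"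
    using ij by (simp add: sum.delta)
  finally show "(diag_matrix r d * A) $$ (i,j) = mat r c (\<lambda>(i,j). d i * A $$ (i,j)) $$ (i,j)" using ij by simp
qed (use A in \<open>auto simp: diag_matrix_def\<close>)

theorem proposition1:
  fixes N :: nat and \<sigma> :: "nat \<Rightarrow> real"
  assumes "N \<ge> 1"
  shows "aux_filter_mat N \<sigma> = filter_mat N \<sigma>"
proof -
  obtain n where N: "N = Suc n" using assms by (cases N) auto
  define \<xi> where "\<xi> i = lgl_node N i" for i
  define L where "L = sorted_list_of_set (lgl_nodes N)"
  have fin: "finite (lgl_nodes N)" unfolding N by (rule nodes_finite)
  have lenL: "Suc N \<le> length L" unfolding L_def using nodes_card[of n] fin N by simp
  have node: "\<xi> i \<in> lgl_nodes N" if "i < Suc N" for i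
  proof -
    have "L ! i \<in> set L" using that lenL by (intro nth_mem) simp
    then show ?thesis using fin unfolding \<xi>_def lgl_node_def L_def by simp
  qed
  have dist: "\<xi> i \<noteq> \<xi> j" if "i < Suc N" "j < Suc N" "i \<noteq> j" for i j
  proof -
    have "distinct L" unfolding L_def by simp
    then show ?thesis using that lenL nth_eq_iff_index_eq[of L i j]
      unfolding \<xi>_def lgl_node_def L_def[symmetric] by auto
  qed
  define \<omega> where "\<omega> i = lgl_weight N i" for i
  have Kge: "K n (\<xi> i) (\<xi> i) \<ge> 1" for i by (rule K_ge1)
  have \<omega>K: "\<omega> i = 2 / K n (\<xi> i) (\<xi> i)" if "i < Suc N" for i
    using K_diag[of "\<xi> i" n] node[OF that] unfolding \<omega>_def lgl_weight_def \<xi>_def N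
    by (simp add: algebra_simps)
  have \<omega>nz: "\<omega> i \<noteq> 0" if "i < Suc N" for i using \<omega>K[OF that] Kge[of i] by simp
  define s where "s k = sqrt ((2 * real k + 1) / 2)" for k
  define e where "e k = (if k < N then 2 else 2 * real N / (2 * real N + 1))" for k
  have se: "s k * s k * e k = (if k \<le> n then 2 * real k + 1 else real (Suc n))" if "k < Suc N" for k
  proof -
    have "s k * s k = (2 * real k + 1) / 2" unfolding s_def by simp
    show ?thesis
    proof (cases "k \<le> n")
      case True then show ?thesis using \<open>s k * s k = _\<close> unfolding e_def N by (simp add: field_simps)
    next
      case False then have "k = Suc n" using that N by simp
      then show ?thesis using \<open>s k * s k = _\<close> unfolding e_def N by (simp add: field_simps)
    qed
  qed
  define V where "V = vander_mat N"
  have Vc: "V \<in> carrier_mat (Suc N) (Suc N)" unfolding V_def vander_mat_def by simp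
  have Ve: "V $$ (i,k) = s k * P k (\<xi> i)" if "i < Suc N" "k < Suc N" for i k
    using that unfolding V_def vander_mat_def norm_legendre_def s_def \<xi>_def by simp
  define W where "W = mat (Suc N) (Suc N) (\<lambda>(k,j). e k * s k * P k (\<xi> j) * \<omega> j / 2)"
  have Wc: "W \<in> carrier_mat (Suc N) (Suc N)" unfolding W_def by simp
  have sumK: "(\<Sum>k<Suc N. s k * s k * e k * P k x * P k y) = K n x y" for x y
  proof -
    have "(\<Sum>k<Suc N. s k * s k * e k * P k x * P k y)
        = (\<Sum>k<Suc N. (if k \<le> n then 2 * real k + 1 else real (Suc n)) * P k x * P k y)"
      by (rule sum.cong) (simp_all add: se)
    also have "\<dots> = (\<Sum>k\<le>n. (2 * real k + 1) * P k x * P k y) + real (Suc n) * P (Suc n) x * P (Suc n) y"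
      unfolding N by (simp add: lessThan_Suc_atMost[symmetric])
    finally show ?thesis unfolding K_def .
  qed
  have VW: "V * W = 1\<^sub>m (Suc N)"
  proof (rule eq_matI)
    fix i j assume "i < dim_row (1\<^sub>m (Suc N))" "j < dim_col (1\<^sub>m (Suc N))"
    then have ij: "i < Suc N" "j < Suc N" by auto
    have "(V * W) $$ (i,j) = (\<Sum>k\<in>{0..<Suc N}. V $$ (i,k) * W $$ (k,j))"
      using Vc Wc ij by (simp add: scalar_prod_def)
    also have "\<dots> = (\<Sum>k<Suc N. (s k * s k * e k * P k (\<xi> i) * P k (\<xi> j)) * (\<omega> j / 2))"
      unfolding atLeast0LessThan
      by (rule sum.cong) (use ij Ve in \<open>auto simp: W_def algebra_simps\<close>)
    also have "\<dots> = K n (\<xi> i) (\<xi> j) * (\<omega> j / 2)" unfolding sum_distrib_right[symmetric] sumK ..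
    also have "\<dots> = 1\<^sub>m (Suc N) $$ (i,j)"
    proof (cases "i = j")
      case True then show ?thesis using \<omega>K[OF ij(2)] Kge[of j] ij by simp
    next
      case False
      have "K n (\<xi> i) (\<xi> j) = 0" using K_off[of "\<xi> i" n "\<xi> j"] node ij dist[OF ij False] N by simp
      then show ?thesis using False ij by simp
    qed
    finally show "(V * W) $$ (i,j) = 1\<^sub>m (Suc N) $$ (i,j)" .
  qed (use Vc Wc in auto)
  have invV: "inv_mat V = W" by (rule inv_mat_eq[OF Vc Wc VW])
  define Mi where "Mi = diag_matrix (Suc N) (\<lambda>i. 1 / \<omega> i)"
  have Mc: "mass_mat N \<in> carrier_mat (Suc N) (Suc N)" unfolding mass_mat_def diag_matrix_def by simp
  have Mic: "Mi \<in> carrier_mat (Suc N) (Suc N)" unfolding Mi_def diag_matrix_def by simp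
  have MMi: "mass_mat N * Mi = 1\<^sub>m (Suc N)"
    unfolding Mi_def mult_diag_right[OF Mc]
    by (rule eq_matI) (auto simp: mass_mat_def diag_matrix_def \<omega>_def[symmetric] \<omega>nz)
  have invM: "inv_mat (mass_mat N) = Mi" by (rule inv_mat_eq[OF Mc Mic MMi])
  define G where "G i j = (\<Sum>k<Suc N. \<sigma> k * (s k * s k * e k) * (P k (\<xi> i) * P k (\<xi> j)) / 2)" for i j
  have Gsym: "G i j = G j i" for i j unfolding G_def by (simp add: mult.commute)
  define F where "F = filter_mat N \<sigma>"
  have Fc: "F \<in> carrier_mat (Suc N) (Suc N)"
  proof -
    have Dc: "diag_matrix (Suc N) \<sigma> \<in> carrier_mat (Suc N) (Suc N)" by (simp add: diag_matrix_def)
    show ?thesis unfolding F_def filter_mat_def V_def[symmetric] invV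
      using mult_carrier_mat[OF mult_carrier_mat[OF Vc Dc] Wc] by simp
  qed
  have Fe: "F $$ (i,j) = G i j * \<omega> j" if ij: "i < Suc N" "j < Suc N" for i j
  proof -
    have VD: "V * diag_matrix (Suc N) \<sigma> = mat (Suc N) (Suc N) (\<lambda>(i,k). V $$ (i,k) * \<sigma> k)"
      by (rule mult_diag_right[OF Vc])
    have "F $$ (i,j) = (\<Sum>k\<in>{0..<Suc N}. (V $$ (i,k) * \<sigma> k) * W $$ (k,j))"
    proof -
      have Fd: "F = (V * diag_matrix (Suc N) \<sigma>) * W"
        using invV unfolding F_def filter_mat_def V_def by simp
      show ?thesis unfolding Fd VD using ij Wc by (simp add: scalar_prod_def)
    qed
    also have "\<dots> = (\<Sum>k<Suc N. \<sigma> k * (s k * s k * e k) * (P k (\<xi> i) * P k (\<xi> j)) / 2 * \<omega> j)"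
      unfolding atLeast0LessThan
      by (rule sum.cong) (use ij Ve in \<open>auto simp: W_def algebra_simps\<close>)
    also have "\<dots> = G i j * \<omega> j" unfolding G_def sum_distrib_right ..
    finally show ?thesis .
  qed
  have FT: "transpose_mat F \<in> carrier_mat (Suc N) (Suc N)" using Fc by simp
  have "aux_filter_mat N \<sigma> = Mi * transpose_mat F * mass_mat N"
    unfolding aux_filter_mat_def invM F_def by simp
  also have "\<dots> = mat (Suc N) (Suc N) (\<lambda>(i,j). (1 / \<omega> i * transpose_mat F $$ (i,j)) * \<omega> j)"
    unfolding Mi_def mult_diag_left[OF FT] mass_mat_def \<omega>_def[symmetric]
    by (subst mult_diag_right) auto
  also have "\<dots> = F"
  proof (rule eq_matI)
    fix i j assume "i < dim_row F" "j < dim_col F"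
    then have ij: "i < Suc N" "j < Suc N" using Fc by auto
    have "(1 / \<omega> i * transpose_mat F $$ (i,j)) * \<omega> j = (1 / \<omega> i * (G j i * \<omega> i)) * \<omega> j"
      using ij Fc Fe[of j i] by simp
    also have "\<dots> = G i j * \<omega> j" using \<omega>nz[OF ij(1)] Gsym[of i j] by simp
    also have "\<dots> = F $$ (i,j)" using Fe[OF ij] by simp
    finally show "mat (Suc N) (Suc N) (\<lambda>(i,j). (1 / \<omega> i * transpose_mat F $$ (i,j)) * \<omega> j) $$ (i,j) = F $$ (i,j)"
      using ij by simp
  qed (use Fc in auto)
  finally show ?thesis unfolding F_def .
qed

end
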